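(* Let $S=\mathbb{K}[x_1,\dots,x_n]$ be a polynomial ring over a field $\mathbb{K}$. Let $\mathcal{C}=(V,E)$ be a clutter with $V\subseteq\{x_1,\dots,x_n\}$, and let $\mathcal{C}'=(V,E')$ be the clutter obtained from $\mathcal{C}$ by removing all edges that contain a free vertex. Let $\beta(\mathcal{C}')$ be the matching number of $\mathcal{C}'$. Then \[ \operatorname{sreg}(S/I(\mathcal{C}))\le |V|-|E|+|E'|-\beta(\mathcal{C}'). \]
   Context: A clutter $\mathcal{C}=(V,E)$ consists of a finite vertex set $V$ and a collection $E$ of subsets of $V$ (edges), no edge containing another; vertices are identified with variables and $I(\mathcal{C})=(\prod_{x\in e}x : e\in E)\subset S$ is the edge ideal. An edge $e$ contains a free vertex if some $x\in e$ belongs to no other edge of $\mathcal{C}$. A matching is a set of pairwise disjoint edges; the matching number is the maximum size of a matching. Stanley regularity: for a squarefree monomial ideal $I\subset S$, a squarefree Stanley decomposition of $S/I$ is a decomposition $S/I=\bigoplus_{i=1}^r u_i\mathbb{K}[Z_i]$ as $\mathbb{K}$-vector spaces, where $Z_i\subseteq\{x_1,\dots,x_n\}$, $u_i$ are (images of) squarefree monomials with $\operatorname{supp}(u_i)\subseteq Z_i$, and each $u_i\mathbb{K}[Z_i]$ is the $\mathbb{K}$-span of $u_iv$, $v$ a monomial of $\mathbb{K}[Z_i]$, free over $\mathbb{K}[Z_i]$. Its Stanley regularity is $\max_i\deg(u_i)$, and $\operatorname{sreg}(S/I)$ is the minimum of this over all such decompositions. *)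

theory Defs
  imports Main
begin

definition clutter :: "'a set \<Rightarrow> 'a set set \<Rightarrow> bool" where
  "clutter V E \<longleftrightarrow> finite V \<and> (\<forall>e\<in>E. e \<subseteq> V \<and> e \<noteq> {}) \<and>
     (\<forall>e\<in>E. \<forall>f\<in>E. e \<subseteq> f \<longrightarrow> e = f)"

definition free_vertex :: "'a set set \<Rightarrow> 'a set \<Rightarrow> 'a \<Rightarrow> bool" where
  "free_vertex E e x \<longleftrightarrow> x \<in> e \<and> (\<forall>f\<in>E. x \<in> f \<longrightarrow> f = e)"

definition has_free_vertex :: "'a set set \<Rightarrow> 'a set \<Rightarrow> bool" where
  "has_free_vertex E e \<longleftrightarrow> (\<exists>x. free_vertex E e x)"

definition remove_free_edges :: "'a set set \<Rightarrow> 'a set set" where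
  "remove_free_edges E = {e\<in>E. \<not> has_free_vertex E e}"

definition matching :: "'a set set \<Rightarrow> 'a set set \<Rightarrow> bool" where
  "matching E M \<longleftrightarrow> M \<subseteq> E \<and> (\<forall>e\<in>M. \<forall>f\<in>M. e \<noteq> f \<longrightarrow> e \<inter> f = {})"

definition matching_number :: "'a set set \<Rightarrow> nat" where
  "matching_number E = Max {card M | M. matching E M}"

(* Monomials in the variables X: exponent vectors 'a \<Rightarrow> nat vanishing outside X. *)
definition monomials :: "'a set \<Rightarrow> ('a \<Rightarrow> nat) set" where
  "monomials X = {m. \<forall>x. x \<notin> X \<longrightarrow> m x = 0}"

(* m lies in the edge ideal I(C) iff some edge monomial divides m *)
definition in_edge_ideal :: "'a set set \<Rightarrow> ('a \<Rightarrow> nat) \<Rightarrow> bool" where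
  "in_edge_ideal E m \<longleftrightarrow> (\<exists>e\<in>E. \<forall>x\<in>e. 0 < m x)"

(* standard monomials: their images form a K-basis of S/I(C) *)
definition std_monomials :: "'a set \<Rightarrow> 'a set set \<Rightarrow> ('a \<Rightarrow> nat) set" where
  "std_monomials X E = {m \<in> monomials X. \<not> in_edge_ideal E m}"

(* the monomials u*v, v a monomial in K[Z], u squarefree given by its support *)
definition stanley_piece :: "'a set \<times> 'a set \<Rightarrow> ('a \<Rightarrow> nat) set" where
  "stanley_piece uZ = {m. \<exists>v \<in> monomials (snd uZ). m = (\<lambda>x. (if x \<in> fst uZ then 1 else 0) + v x)}"

(* squarefree Stanley decomposition of S/I(C), S = K[X]: list of pairs (supp u_i, Z_i) *)
definition stanley_decomposition :: "'a set \<Rightarrow> 'a set set \<Rightarrow> ('a set \<times> 'a set) list \<Rightarrow> bool" where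
  "stanley_decomposition X E D \<longleftrightarrow>
     (\<forall>(u, Z) \<in> set D. u \<subseteq> Z \<and> Z \<subseteq> X) \<and>
     (\<forall>i < length D. stanley_piece (D ! i) \<subseteq> std_monomials X E) \<and>
     (\<forall>m \<in> std_monomials X E. \<exists>!i. i < length D \<and> m \<in> stanley_piece (D ! i))"

definition stanley_reg_of :: "('a set \<times> 'a set) list \<Rightarrow> nat" where
  "stanley_reg_of D = Max (insert 0 ((card \<circ> fst) ` set D))"

definition sreg :: "'a set \<Rightarrow> 'a set set \<Rightarrow> nat" where
  "sreg X E = (LEAST k. \<exists>D. stanley_decomposition X E D \<and> stanley_reg_of D = k)"

end

theory Submission
  imports Defs
begin

definition faces :: "'a set \<Rightarrow> 'a set set \<Rightarrow> 'a set set" where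
  "faces W E = {s. s \<subseteq> W \<and> (\<forall>f\<in>E. \<not> f \<subseteq> s)}"

definition ipart :: "'a set set \<Rightarrow> ('a set \<times> 'a set) set \<Rightarrow> bool" where
  "ipart T Q \<longleftrightarrow> finite Q \<and> (\<forall>p\<in>Q. fst p \<subseteq> snd p \<and> (\<forall>s. fst p \<subseteq> s \<and> s \<subseteq> snd p \<longrightarrow> s \<in> T))
     \<and> (\<forall>s\<in>T. \<exists>!p\<in>Q. fst p \<subseteq> s \<and> s \<subseteq> snd p)"

lemma ipartI:
  assumes "finite Q" "\<And>p. p \<in> Q \<Longrightarrow> fst p \<subseteq> snd p"
    "\<And>p s. p \<in> Q \<Longrightarrow> fst p \<subseteq> s \<Longrightarrow> s \<subseteq> snd p \<Longrightarrow> s \<in> T"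
    "\<And>s. s \<in> T \<Longrightarrow> \<exists>p\<in>Q. fst p \<subseteq> s \<and> s \<subseteq> snd p"
    "\<And>s p q. s \<in> T \<Longrightarrow> p \<in> Q \<Longrightarrow> q \<in> Q \<Longrightarrow> fst p \<subseteq> s \<Longrightarrow> s \<subseteq> snd p \<Longrightarrow>
       fst q \<subseteq> s \<Longrightarrow> s \<subseteq> snd q \<Longrightarrow> p = q"
  shows "ipart T Q"
proof -
  have ex: "\<exists>!p. p \<in> Q \<and> fst p \<subseteq> s \<and> s \<subseteq> snd p" if s: "s \<in> T" for s
  proof -
    obtain p where p: "p\<in>Q" "fst p \<subseteq> s" "s \<subseteq> snd p" using assms(4)[OF s] by blast
    show ?thesis
    proof (rule ex1I[where a=p])
      show "p \<in> Q \<and> fst p \<subseteq> s \<and> s \<subseteq> snd p" using p by blast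
    next
      fix q assume "q \<in> Q \<and> fst q \<subseteq> s \<and> s \<subseteq> snd q"
      then show "q = p" using assms(5)[OF s, of q p] p by blast
    qed
  qed
  have b: "\<forall>p\<in>Q. fst p \<subseteq> snd p \<and> (\<forall>s. fst p \<subseteq> s \<and> s \<subseteq> snd p \<longrightarrow> s \<in> T)"
    using assms(2,3) by blast
  show ?thesis unfolding ipart_def
    apply (intro conjI)
      apply (rule assms(1))
     apply (rule b)
    apply (rule ballI)
    apply (erule ex)
    done
qed

lemma ipart_fin: "ipart T Q \<Longrightarrow> finite Q" unfolding ipart_def by (elim conjE)
lemma ipart_le: "ipart T Q \<Longrightarrow> p \<in> Q \<Longrightarrow> fst p \<subseteq> snd p"
  unfolding ipart_def by (elim conjE, drule bspec, assumption, elim conjE)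
lemma ipart_in: "ipart T Q \<Longrightarrow> p \<in> Q \<Longrightarrow> fst p \<subseteq> s \<Longrightarrow> s \<subseteq> snd p \<Longrightarrow> s \<in> T"
  unfolding ipart_def by (elim conjE, drule bspec, assumption, elim conjE allE impE, rule conjI)
lemma ipart_fstin: "ipart T Q \<Longrightarrow> p \<in> Q \<Longrightarrow> fst p \<in> T"
  by (rule ipart_in[OF _ _ order_refl ipart_le])
lemma ipart_ex1: "ipart T Q \<Longrightarrow> s \<in> T \<Longrightarrow> \<exists>!p. p \<in> Q \<and> fst p \<subseteq> s \<and> s \<subseteq> snd p"
  unfolding ipart_def by (elim conjE, drule bspec, assumption)
lemma ipart_ex: "ipart T Q \<Longrightarrow> s \<in> T \<Longrightarrow> \<exists>p\<in>Q. fst p \<subseteq> s \<and> s \<subseteq> snd p"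
  by (drule (1) ipart_ex1, erule ex1E, rule bexI, erule conjunct2, erule conjunct1)
lemma ipart_uniq: "ipart T Q \<Longrightarrow> s \<in> T \<Longrightarrow> p \<in> Q \<Longrightarrow> q \<in> Q \<Longrightarrow> fst p \<subseteq> s \<Longrightarrow> s \<subseteq> snd p \<Longrightarrow>
       fst q \<subseteq> s \<Longrightarrow> s \<subseteq> snd q \<Longrightarrow> p = q"
  apply (drule (1) ipart_ex1)
  apply (erule ex1E)
  apply (frule spec[where x=p])
  apply (drule spec[where x=q])
  apply simp
  done

lemma ipart_empty: "ipart {} {}"
  unfolding ipart_def by auto

lemma ipart_union:
  assumes A: "ipart A P1" and B: "ipart B P2" and d: "A \<inter> B = {}"
  shows "ipart (A \<union> B) (P1 \<union> P2)"
proof (rule ipartI)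
  show "finite (P1 \<union> P2)" using ipart_fin[OF A] ipart_fin[OF B] by simp
next
  fix p assume "p \<in> P1 \<union> P2"
  then show "fst p \<subseteq> snd p" using ipart_le[OF A] ipart_le[OF B] by blast
next
  fix p s assume "p \<in> P1 \<union> P2" "fst p \<subseteq> s" "s \<subseteq> snd p"
  then show "s \<in> A \<union> B" using ipart_in[OF A, of p s] ipart_in[OF B, of p s] by blast
next
  fix s assume "s \<in> A \<union> B"
  then show "\<exists>p\<in>P1 \<union> P2. fst p \<subseteq> s \<and> s \<subseteq> snd p"
    using ipart_ex[OF A, of s] ipart_ex[OF B, of s] by blast
next
  fix s p q assume s: "s \<in> A \<union> B" and pq: "p \<in> P1 \<union> P2" "q \<in> P1 \<union> P2"
    and i: "fst p \<subseteq> s" "s \<subseteq> snd p" "fst q \<subseteq> s" "s \<subseteq> snd q"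
  show "p = q"
  proof (cases "s \<in> A")
    case True
    then have "s \<notin> B" using d by blast
    then have "p \<in> P1" "q \<in> P1" using pq i ipart_in[OF B, of p s] ipart_in[OF B, of q s] by blast+
    then show ?thesis using ipart_uniq[OF A True _ _ i] by blast
  next
    case False
    then have sB: "s \<in> B" using s by blast
    then have "p \<in> P2" "q \<in> P2" using pq i ipart_in[OF A, of p s] ipart_in[OF A, of q s] False by blast+
    then show ?thesis using ipart_uniq[OF B sB _ _ i] by blast
  qed
qed

lemma ipart_shift:
  assumes Q: "ipart T Q" and d: "\<forall>s\<in>T. s \<inter> c = {}"
  shows "ipart ((\<lambda>s. s \<union> c) ` T) ((\<lambda>p. (fst p \<union> c, snd p \<union> c)) ` Q)"
proof (rule ipartI)
  show "finite ((\<lambda>p. (fst p \<union> c, snd p \<union> c)) ` Q)" using ipart_fin[OF Q] by simp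
next
  fix p assume "p \<in> (\<lambda>p. (fst p \<union> c, snd p \<union> c)) ` Q"
  then show "fst p \<subseteq> snd p" using ipart_le[OF Q] by fastforce
next
  fix p s assume p: "p \<in> (\<lambda>p. (fst p \<union> c, snd p \<union> c)) ` Q" and ps: "fst p \<subseteq> s" "s \<subseteq> snd p"
  then obtain q where q: "q \<in> Q" "p = (fst q \<union> c, snd q \<union> c)" by blast
  have "fst q \<inter> c = {}" using ipart_fstin[OF Q q(1)] d by blast
  then have "fst q \<subseteq> s - c" "s - c \<subseteq> snd q" using ps q(2) by auto
  then have "s - c \<in> T" using ipart_in[OF Q q(1)] by blast
  moreover have "s = (s - c) \<union> c" using ps q(2) by auto
  ultimately show "s \<in> (\<lambda>s. s \<union> c) ` T" by blast
next
  fix s assume "s \<in> (\<lambda>s. s \<union> c) ` T"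
  then obtain t where t: "t \<in> T" "s = t \<union> c" by blast
  obtain q where "q \<in> Q" "fst q \<subseteq> t" "t \<subseteq> snd q" using ipart_ex[OF Q t(1)] by blast
  then show "\<exists>p\<in>(\<lambda>p. (fst p \<union> c, snd p \<union> c)) ` Q. fst p \<subseteq> s \<and> s \<subseteq> snd p"
    using t(2) by (intro bexI[where x="(fst q \<union> c, snd q \<union> c)"]) auto
next
  fix s p p' assume s: "s \<in> (\<lambda>s. s \<union> c) ` T"
    and p: "p \<in> (\<lambda>p. (fst p \<union> c, snd p \<union> c)) ` Q" and p': "p' \<in> (\<lambda>p. (fst p \<union> c, snd p \<union> c)) ` Q"
    and i: "fst p \<subseteq> s" "s \<subseteq> snd p" "fst p' \<subseteq> s" "s \<subseteq> snd p'"
  obtain t where t: "t \<in> T" "s = t \<union> c" using s by blast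
  have tc: "t \<inter> c = {}" using d t(1) by blast
  obtain q where q: "q \<in> Q" "p = (fst q \<union> c, snd q \<union> c)" using p by blast
  obtain q' where q': "q' \<in> Q" "p' = (fst q' \<union> c, snd q' \<union> c)" using p' by blast
  have "fst q \<inter> c = {}" using ipart_fstin[OF Q q(1)] d by blast
  then have 1: "fst q \<subseteq> t" "t \<subseteq> snd q" using i(1,2) q(2) t(2) tc by auto
  have "fst q' \<inter> c = {}" using ipart_fstin[OF Q q'(1)] d by blast
  then have 2: "fst q' \<subseteq> t" "t \<subseteq> snd q'" using i(3,4) q'(2) t(2) tc by auto
  have "q = q'" using ipart_uniq[OF Q t(1) q(1) q'(1) 1 2] .
  then show "p = p'" using q q' by simp
qed

lemma ipart_cone:
  assumes Q: "ipart T Q" and d: "\<forall>s\<in>T. s \<inter> Y = {}"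
  shows "ipart {s \<union> t | s t. s \<in> T \<and> t \<subseteq> Y} ((\<lambda>p. (fst p, snd p \<union> Y)) ` Q)"
proof (rule ipartI)
  show "finite ((\<lambda>p. (fst p, snd p \<union> Y)) ` Q)" using ipart_fin[OF Q] by simp
next
  fix p assume "p \<in> (\<lambda>p. (fst p, snd p \<union> Y)) ` Q"
  then show "fst p \<subseteq> snd p" using ipart_le[OF Q] by fastforce
next
  fix p s assume p: "p \<in> (\<lambda>p. (fst p, snd p \<union> Y)) ` Q" and ps: "fst p \<subseteq> s" "s \<subseteq> snd p"
  then obtain q where q: "q \<in> Q" "p = (fst q, snd q \<union> Y)" by blast
  have "fst q \<inter> Y = {}" using ipart_fstin[OF Q q(1)] d by blast
  then have "fst q \<subseteq> s - Y" "s - Y \<subseteq> snd q" using ps q(2) by auto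
  then have "s - Y \<in> T" using ipart_in[OF Q q(1)] by blast
  moreover have "s = (s - Y) \<union> (s \<inter> Y)" by auto
  ultimately show "s \<in> {s \<union> t | s t. s \<in> T \<and> t \<subseteq> Y}" by blast
next
  fix s assume "s \<in> {s \<union> t | s t. s \<in> T \<and> t \<subseteq> Y}"
  then obtain t u where t: "t \<in> T" "u \<subseteq> Y" "s = t \<union> u" by blast
  obtain q where "q \<in> Q" "fst q \<subseteq> t" "t \<subseteq> snd q" using ipart_ex[OF Q t(1)] by blast
  then show "\<exists>p\<in>(\<lambda>p. (fst p, snd p \<union> Y)) ` Q. fst p \<subseteq> s \<and> s \<subseteq> snd p"
    using t(2,3) by (intro bexI[where x="(fst q, snd q \<union> Y)"]) auto
next
  fix s p p' assume s: "s \<in> {s \<union> t | s t. s \<in> T \<and> t \<subseteq> Y}"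
    and p: "p \<in> (\<lambda>p. (fst p, snd p \<union> Y)) ` Q" and p': "p' \<in> (\<lambda>p. (fst p, snd p \<union> Y)) ` Q"
    and i: "fst p \<subseteq> s" "s \<subseteq> snd p" "fst p' \<subseteq> s" "s \<subseteq> snd p'"
  obtain t u where t: "t \<in> T" "u \<subseteq> Y" "s = t \<union> u" using s by blast
  have tc: "t \<inter> Y = {}" using d t(1) by blast
  obtain q where q: "q \<in> Q" "p = (fst q, snd q \<union> Y)" using p by blast
  obtain q' where q': "q' \<in> Q" "p' = (fst q', snd q' \<union> Y)" using p' by blast
  have "fst q \<inter> Y = {}" using ipart_fstin[OF Q q(1)] d by blast
  then have 1: "fst q \<subseteq> t" "t \<subseteq> snd q" using i(1,2) q(2) t(2,3) tc by auto
  have "fst q' \<inter> Y = {}" using ipart_fstin[OF Q q'(1)] d by blast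
  then have 2: "fst q' \<subseteq> t" "t \<subseteq> snd q'" using i(3,4) q'(2) t(2,3) tc by auto
  have "q = q'" using ipart_uniq[OF Q t(1) q(1) q'(1) 1 2] .
  then show "p = p'" using q q' by simp
qed

lemma ipart_base:
  assumes "finite W"
  shows "ipart (faces W E) ((\<lambda>s. (s, s)) ` faces W E)"
proof (rule ipartI)
  have "faces W E \<subseteq> Pow W" unfolding faces_def by blast
  then show "finite ((\<lambda>s. (s, s)) ` faces W E)" using assms finite_subset by blast
next
  fix s assume "s \<in> faces W E"
  then show "\<exists>p\<in>(\<lambda>s. (s, s)) ` faces W E. fst p \<subseteq> s \<and> s \<subseteq> snd p" by force
qed auto


lemma faces_iff: "s \<in> faces W E \<longleftrightarrow> s \<subseteq> W \<and> (\<forall>f\<in>E. \<not> f \<subseteq> s)"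
  unfolding faces_def by simp

lemma faces_disj: "s \<in> faces (W - Y) E \<Longrightarrow> s \<inter> Y = {}"
  unfolding faces_iff by blast

lemma faces_img_iff: "s \<in> faces W ((\<lambda>f. f - c) ` E) \<longleftrightarrow> s \<subseteq> W \<and> (\<forall>f\<in>E. \<not> f - c \<subseteq> s)"
  unfolding faces_iff by simp

lemma faces_dl:
  assumes "y \<in> W"
  shows "faces W E = faces (W - {y}) {f\<in>E. y \<notin> f} \<union> (\<lambda>s. s \<union> {y}) ` faces (W - {y}) ((\<lambda>f. f - {y}) ` E)"
    (is "?L = ?A \<union> ?B")
proof
  show "?L \<subseteq> ?A \<union> ?B"
  proof
    fix s assume s: "s \<in> ?L"
    show "s \<in> ?A \<union> ?B"
    proof (cases "y \<in> s")
      case True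
      have "s - {y} \<in> faces (W - {y}) ((\<lambda>f. f - {y}) ` E)"
        unfolding faces_img_iff
      proof (intro conjI ballI)
        show "s - {y} \<subseteq> W - {y}" using s unfolding faces_iff by blast
        fix f assume f: "f \<in> E"
        show "\<not> f - {y} \<subseteq> s - {y}"
        proof
          assume "f - {y} \<subseteq> s - {y}"
          then have "f \<subseteq> s" using True by blast
          then show False using s f unfolding faces_iff by blast
        qed
      qed
      moreover have "s = (s - {y}) \<union> {y}" using True by blast
      ultimately show ?thesis by (intro UnI2) (rule image_eqI)
    next
      case False
      have "s \<in> ?A" unfolding faces_iff
      proof (intro conjI ballI)
        show "s \<subseteq> W - {y}" using s False unfolding faces_iff by blast
        fix f assume "f \<in> {f \<in> E. y \<notin> f}"
        then show "\<not> f \<subseteq> s" using s unfolding faces_iff by blast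
      qed
      then show ?thesis by (rule UnI1)
    qed
  qed
next
  show "?A \<union> ?B \<subseteq> ?L"
  proof
    fix s assume "s \<in> ?A \<union> ?B"
    then show "s \<in> ?L"
    proof
      assume sA: "s \<in> ?A"
      show ?thesis unfolding faces_iff
      proof (intro conjI ballI)
        show "s \<subseteq> W" using sA unfolding faces_iff by blast
        fix f assume f: "f \<in> E"
        show "\<not> f \<subseteq> s"
        proof (cases "y \<in> f")
          case True then show ?thesis using sA unfolding faces_iff by blast
        next
          case False then show ?thesis using sA f unfolding faces_iff by blast
        qed
      qed
    next
      assume "s \<in> ?B"
      then obtain t where t: "t \<in> faces (W - {y}) ((\<lambda>f. f - {y}) ` E)" "s = t \<union> {y}" by (rule imageE)
      show ?thesis unfolding faces_iff
      proof (intro conjI ballI)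
        show "s \<subseteq> W" using t assms unfolding faces_img_iff by blast
        fix f assume f: "f \<in> E"
        show "\<not> f \<subseteq> s"
        proof
          assume "f \<subseteq> s"
          then have "f - {y} \<subseteq> t" using t(2) by blast
          then show False using t(1) f unfolding faces_img_iff by blast
        qed
      qed
    qed
  qed
qed

lemma faces_dl_disj:
  "faces (W - {y}) E1 \<inter> (\<lambda>s. s \<union> {y}) ` faces (W - {y}) E2 = {}"
proof -
  have "False" if "s \<in> faces (W - {y}) E1" "s = t \<union> {y}" for s t
    using that unfolding faces_iff by blast
  then show ?thesis by blast
qed


lemma faces_star:
  assumes e: "e \<in> E" "y \<in> e" "e \<subseteq> W" and priv: "\<forall>f\<in>E. y \<in> f \<longrightarrow> f = e"
  shows "faces W E = {s \<union> t | s t. s \<in> faces (W - {y}) ((\<lambda>f. f - {y}) ` E) \<and> t \<subseteq> {y}}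
      \<union> (\<lambda>s. s \<union> (e - {y})) ` faces (W - e) ((\<lambda>f. f - (e - {y})) ` (E - {e}))"
    (is "?L = ?A \<union> ?B")
proof
  show "?L \<subseteq> ?A \<union> ?B"
  proof
    fix s assume s: "s \<in> ?L"
    have sW: "s \<subseteq> W" and sf: "\<And>f. f \<in> E \<Longrightarrow> \<not> f \<subseteq> s" using s unfolding faces_iff by auto
    show "s \<in> ?A \<union> ?B"
    proof (cases "\<exists>f\<in>E. y \<in> f \<and> f - {y} \<subseteq> s")
      case False
      have "s - {y} \<in> faces (W - {y}) ((\<lambda>f. f - {y}) ` E)"
        unfolding faces_img_iff
      proof (intro conjI ballI)
        show "s - {y} \<subseteq> W - {y}" using sW by blast
        fix f assume f: "f \<in> E"
        show "\<not> f - {y} \<subseteq> s - {y}"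
        proof
          assume fs: "f - {y} \<subseteq> s - {y}"
          show False
          proof (cases "y \<in> f")
            case True then show False using False f fs by blast
          next
            case False then have "f \<subseteq> s" using fs by blast
            then show False using sf f by blast
          qed
        qed
      qed
      then have "s \<in> ?A"
        by (intro CollectI exI[of _ "s - {y}"] exI[of _ "s \<inter> {y}"] conjI) blast+
      then show ?thesis by (rule UnI1)
    next
      case True
      then obtain f where f: "f \<in> E" "y \<in> f" "f - {y} \<subseteq> s" by blast
      have fe: "f = e" using priv f(1,2) by blast
      have ys: "y \<notin> s" using sf[OF f(1)] f(3) by blast
      have cs: "e - {y} \<subseteq> s" using f(3) fe by simp
      have "s - (e - {y}) \<in> faces (W - e) ((\<lambda>f. f - (e - {y})) ` (E - {e}))"
        unfolding faces_img_iff
      proof (intro conjI ballI)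
        show "s - (e - {y}) \<subseteq> W - e" using sW ys by blast
        fix g assume g: "g \<in> E - {e}"
        show "\<not> g - (e - {y}) \<subseteq> s - (e - {y})"
        proof
          assume "g - (e - {y}) \<subseteq> s - (e - {y})"
          then have "g \<subseteq> s" using cs by blast
          then show False using sf g by blast
        qed
      qed
      moreover have "s = (s - (e - {y})) \<union> (e - {y})" using cs by blast
      ultimately show ?thesis by (intro UnI2) (rule image_eqI)
    qed
  qed
next
  show "?A \<union> ?B \<subseteq> ?L"
  proof
    fix s assume "s \<in> ?A \<union> ?B"
    then show "s \<in> ?L"
    proof
      assume "s \<in> ?A"
      then obtain t u where t: "t \<in> faces (W - {y}) ((\<lambda>f. f - {y}) ` E)" "u \<subseteq> {y}" "s = t \<union> u" by blast
      show ?thesis unfolding faces_iff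
      proof (intro conjI ballI)
        show "s \<subseteq> W" using t e unfolding faces_img_iff by blast
        fix f assume f: "f \<in> E"
        show "\<not> f \<subseteq> s"
        proof
          assume "f \<subseteq> s"
          then have "f - {y} \<subseteq> t" using t(2,3) by blast
          then show False using t(1) f unfolding faces_img_iff by blast
        qed
      qed
    next
      assume "s \<in> ?B"
      then obtain t where t: "t \<in> faces (W - e) ((\<lambda>f. f - (e - {y})) ` (E - {e}))" "s = t \<union> (e - {y})"
        by (rule imageE)
      have tW: "t \<subseteq> W - e" and tf: "\<And>f. f \<in> E - {e} \<Longrightarrow> \<not> f - (e - {y}) \<subseteq> t"
        using t(1) unfolding faces_img_iff by auto
      show ?thesis unfolding faces_iff
      proof (intro conjI ballI)
        show "s \<subseteq> W" using tW t(2) e(3) by blast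
        fix f assume f: "f \<in> E"
        show "\<not> f \<subseteq> s"
        proof
          assume fs: "f \<subseteq> s"
          show False
          proof (cases "f = e")
            case True
            then have "y \<in> s" using e(2) fs by blast
            then show False using tW t(2) e(2) by blast
          next
            case False
            then have "f - (e - {y}) \<subseteq> t" using fs t(2) by blast
            then show False using tf f False by blast
          qed
        qed
      qed
    qed
  qed
qed

lemma faces_star_disj:
  assumes e: "e \<in> E" "y \<in> e"
  shows "{s \<union> t | s t. s \<in> faces (W - {y}) ((\<lambda>f. f - {y}) ` E) \<and> t \<subseteq> {y}}
      \<inter> (\<lambda>s. s \<union> (e - {y})) ` faces (W - e) E2 = {}"
proof -
  have F: "False" if "s \<in> faces (W - {y}) ((\<lambda>f. f - {y}) ` E)" "t \<subseteq> {y}" "s \<union> t = r \<union> (e - {y})"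
     "r \<in> faces (W - e) E2" for s t r
  proof -
    have "y \<notin> r" using that(4) e unfolding faces_iff by blast
    then have "y \<notin> s \<union> t" using that(3) by blast
    then have "e - {y} \<subseteq> s" using that(2,3) by blast
    then show False using that(1) e(1) unfolding faces_img_iff by blast
  qed
  show ?thesis
  proof (rule equals0I)
    fix x assume "x \<in> {s \<union> t | s t. s \<in> faces (W - {y}) ((\<lambda>f. f - {y}) ` E) \<and> t \<subseteq> {y}}
      \<inter> (\<lambda>s. s \<union> (e - {y})) ` faces (W - e) E2"
    then have xA: "x \<in> {s \<union> t | s t. s \<in> faces (W - {y}) ((\<lambda>f. f - {y}) ` E) \<and> t \<subseteq> {y}}"
      and xB: "x \<in> (\<lambda>s. s \<union> (e - {y})) ` faces (W - e) E2" by (rule IntD1, rule IntD2)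
    from xA obtain s t where st: "x = s \<union> t" "s \<in> faces (W - {y}) ((\<lambda>f. f - {y}) ` E)" "t \<subseteq> {y}"
      by (auto simp only: mem_Collect_eq)
    from xB obtain r where r: "r \<in> faces (W - e) E2" "x = r \<union> (e - {y})" by (rule imageE)
    show False by (rule F[OF st(2) st(3) _ r(1)]) (simp only: st(1)[symmetric] r(2))
  qed
qed



lemma faces_empty: "{} \<in> E \<Longrightarrow> faces W E = {}"
  unfolding faces_def by blast

lemma ipart_faces_empty: "{} \<in> E \<Longrightarrow> ipart (faces W E) {}"
  using faces_empty ipart_empty by metis

lemma main:
  assumes "finite W" "E \<subseteq> Pow W" "P \<subseteq> E" "M \<subseteq> E - P"
   "\<forall>e\<in>P. \<exists>p\<in>e. \<forall>f\<in>E. p \<in> f \<longrightarrow> f = e"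
   "\<forall>f\<in>M. \<forall>g\<in>M. f \<noteq> g \<longrightarrow> f \<inter> g = {}"
  shows "\<exists>Q. ipart (faces W E) Q \<and> (\<forall>q\<in>Q. card (fst q) + card P + card M \<le> card W)"
  using assms
proof (induction "card W" arbitrary: W E P M rule: less_induct)
  case less
  note fW = less.prems(1) and EW = less.prems(2) and PE = less.prems(3) and ME = less.prems(4)
    and priv = less.prems(5) and disj = less.prems(6)
  have fE: "finite E" using EW fW by (meson finite_Pow_iff finite_subset)
  have fP: "finite P" using PE fE finite_subset by blast
  have fM: "finite M" using ME fE finite_subset by blast
  show ?case
  proof (cases "{} \<in> E")
    case True
    then show ?thesis using ipart_faces_empty by blast
  next
    case nE: False
    show ?thesis
    proof (cases "P = {}")
      case False
      then obtain e where eP: "e \<in> P" by blast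
      then obtain y where ye: "y \<in> e" and py: "\<forall>f\<in>E. y \<in> f \<longrightarrow> f = e" using priv by blast
      have eE: "e \<in> E" using eP PE by blast
      have eW: "e \<subseteq> W" using eE EW by blast
      have yW: "y \<in> W" using ye eW by blast
      have cP: "card P \<ge> 1" using eP fP by (metis One_nat_def Suc_leI card_gt_0_iff empty_iff)
      have cW: "card W \<ge> 1" using yW fW by (metis One_nat_def Suc_leI card_gt_0_iff empty_iff)
      have yf: "y \<notin> f" if "f \<in> E" "f \<noteq> e" for f using py that by blast
      define E1 where "E1 = (\<lambda>f. f - {y}) ` E"
      have E1W: "E1 \<subseteq> Pow (W - {y})" using EW unfolding E1_def by blast
      have P1E: "P - {e} \<subseteq> E1"
      proof
        fix f assume f: "f \<in> P - {e}"
        then have "y \<notin> f" using yf PE by blast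
        then have "f = f - {y}" by simp
        moreover have "f \<in> E" using f PE by blast
        ultimately show "f \<in> E1" unfolding E1_def by (rule image_eqI)
      qed
      have M1E: "M \<subseteq> E1 - (P - {e})"
      proof
        fix f assume f: "f \<in> M"
        then have fE': "f \<in> E" "f \<notin> P" using ME by blast+
        then have "f \<noteq> e" using eP by blast
        then have "y \<notin> f" using yf fE' by blast
        then have "f = f - {y}" by simp
        then have "f \<in> E1" unfolding E1_def using fE'(1) by (rule image_eqI)
        then show "f \<in> E1 - (P - {e})" using fE' by blast
      qed
      have priv1: "\<forall>g\<in>P - {e}. \<exists>p\<in>g. \<forall>f\<in>E1. p \<in> f \<longrightarrow> f = g"
      proof
        fix g assume g: "g \<in> P - {e}"
        then obtain p where p: "p \<in> g" "\<forall>f\<in>E. p \<in> f \<longrightarrow> f = g" using priv by blast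
        have ygn: "y \<notin> g" using g yf PE by blast
        have "\<forall>f\<in>E1. p \<in> f \<longrightarrow> f = g"
        proof (intro ballI impI)
          fix f assume "f \<in> E1" "p \<in> f"
          then obtain h where h: "h \<in> E" "f = h - {y}" unfolding E1_def by blast
          then have "h = g" using p \<open>p \<in> f\<close> by blast
          then show "f = g" using h ygn by simp
        qed
        then show "\<exists>p\<in>g. \<forall>f\<in>E1. p \<in> f \<longrightarrow> f = g" using p(1) by blast
      qed
      have lt1: "card (W - {y}) < card W" using yW fW by (meson card_Diff1_less)
      obtain Q1 where Q1: "ipart (faces (W - {y}) E1) Q1"
        and b1: "\<forall>q\<in>Q1. card (fst q) + card (P - {e}) + card M \<le> card (W - {y})"
        using less.hyps[OF lt1 finite_Diff[OF fW] E1W P1E M1E priv1 disj] by blast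
      define Q1' where "Q1' = (\<lambda>p. (fst p, snd p \<union> {y})) ` Q1"
      have QA: "ipart {s \<union> t | s t. s \<in> faces (W - {y}) E1 \<and> t \<subseteq> {y}} Q1'"
        unfolding Q1'_def by (rule ipart_cone[OF Q1]) (intro ballI, erule faces_disj)
      have bA: "\<forall>q\<in>Q1'. card (fst q) + card P + card M \<le> card W"
      proof
        fix q assume "q \<in> Q1'"
        then obtain q0 where q0: "q0 \<in> Q1" "q = (fst q0, snd q0 \<union> {y})" unfolding Q1'_def by blast
        have "card (fst q0) + card (P - {e}) + card M \<le> card (W - {y})" using b1 q0(1) by blast
        moreover have "card (P - {e}) = card P - 1" using eP fP by simp
        moreover have "card (W - {y}) = card W - 1" using yW fW by simp
        ultimately show "card (fst q) + card P + card M \<le> card W" using q0(2) cP cW by simp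
      qed
      define c where "c = e - {y}"
      define E2 where "E2 = (\<lambda>f. f - c) ` (E - {e})"
      obtain Q2 where Q2: "ipart (faces (W - e) E2) Q2"
        and b2: "\<forall>q\<in>Q2. card (fst q) + (card P - 1) + card M \<le> card (W - e)"
      proof (cases "{} \<in> E2")
        case True
        then show ?thesis using that[OF ipart_faces_empty[OF True]] by blast
      next
        case ne2: False
        define P2 where "P2 = (\<lambda>f. f - c) ` (P - {e})"
        define M2 where "M2 = (\<lambda>f. f - c) ` M"
        have pc: "p \<notin> c" if "g \<in> P - {e}" "p \<in> g" "\<forall>f\<in>E. p \<in> f \<longrightarrow> f = g" for g p
          using that eE unfolding c_def by blast
        have E2W: "E2 \<subseteq> Pow (W - e)"
        proof
          fix x assume "x \<in> E2"
          then obtain f where f: "f \<in> E - {e}" "x = f - c" unfolding E2_def by blast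
          have "f \<subseteq> W" "y \<notin> f" using f(1) EW yf by blast+
          then show "x \<in> Pow (W - e)" using f(2) unfolding c_def by blast
        qed
        have P2E: "P2 \<subseteq> E2" unfolding P2_def E2_def using PE by blast
        have M2E: "M2 \<subseteq> E2 - P2"
        proof
          fix x assume "x \<in> M2"
          then obtain f where f: "f \<in> M" "x = f - c" unfolding M2_def by blast
          have fE': "f \<in> E" "f \<notin> P" using f(1) ME by blast+
          have fe: "f \<noteq> e" using fE' eP by blast
          have "x \<in> E2" unfolding E2_def using f(2) fE' fe by blast
          moreover have "x \<notin> P2"
          proof
            assume "x \<in> P2"
            then obtain g where g: "g \<in> P - {e}" "x = g - c" unfolding P2_def by blast
            obtain p where p: "p \<in> g" "\<forall>f\<in>E. p \<in> f \<longrightarrow> f = g" using g(1) priv by blast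
            have "p \<notin> c" using pc[OF g(1) p] .
            then have "p \<in> f" using p(1) g(2) f(2) by blast
            then have "f = g" using p(2) fE'(1) by blast
            then show False using fE'(2) g(1) by blast
          qed
          ultimately show "x \<in> E2 - P2" by blast
        qed
        have priv2: "\<forall>g\<in>P2. \<exists>p\<in>g. \<forall>f\<in>E2. p \<in> f \<longrightarrow> f = g"
        proof
          fix x assume "x \<in> P2"
          then obtain g where g: "g \<in> P - {e}" "x = g - c" unfolding P2_def by blast
          obtain p where p: "p \<in> g" "\<forall>f\<in>E. p \<in> f \<longrightarrow> f = g" using g(1) priv by blast
          have pnc: "p \<notin> c" using pc[OF g(1) p] .
          have "\<forall>f\<in>E2. p \<in> f \<longrightarrow> f = x"
          proof (intro ballI impI)
            fix f assume "f \<in> E2" "p \<in> f"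
            then obtain h where h: "h \<in> E - {e}" "f = h - c" unfolding E2_def by blast
            then have "h = g" using p \<open>p \<in> f\<close> by blast
            then show "f = x" using h g by simp
          qed
          then show "\<exists>p\<in>x. \<forall>f\<in>E2. p \<in> f \<longrightarrow> f = x" using p(1) pnc g(2) by blast
        qed
        have disj2: "\<forall>f\<in>M2. \<forall>g\<in>M2. f \<noteq> g \<longrightarrow> f \<inter> g = {}"
        proof (intro ballI impI)
          fix x z assume "x \<in> M2" "z \<in> M2" "x \<noteq> z"
          then obtain f g where "f \<in> M" "g \<in> M" "x = f - c" "z = g - c" unfolding M2_def by blast
          moreover then have "f \<noteq> g" using \<open>x \<noteq> z\<close> by blast
          ultimately have "f \<inter> g = {}" using disj by blast
          then show "x \<inter> z = {}" using \<open>x = f - c\<close> \<open>z = g - c\<close> by blast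
        qed
        have "W - e \<subset> W" using ye yW by blast
        then have lt2: "card (W - e) < card W" using fW by (rule psubset_card_mono[rotated])
        obtain Q where Q: "ipart (faces (W - e) E2) Q"
          and b: "\<forall>q\<in>Q. card (fst q) + card P2 + card M2 \<le> card (W - e)"
          using less.hyps[OF lt2 finite_Diff[OF fW] E2W P2E M2E priv2 disj2] by blast
        have "inj_on (\<lambda>f. f - c) (P - {e})"
        proof (rule inj_onI)
          fix f g assume f: "f \<in> P - {e}" and g: "g \<in> P - {e}" and eq: "f - c = g - c"
          obtain p where p: "p \<in> f" "\<forall>h\<in>E. p \<in> h \<longrightarrow> h = f" using f priv by blast
          have "p \<notin> c" using pc[OF f p] .
          then have "p \<in> g" using eq p(1) by blast
          then show "f = g" using p(2) g PE by blast
        qed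
        then have "card P2 = card (P - {e})" unfolding P2_def by (rule card_image)
        then have cP2: "card P2 = card P - 1" using eP fP by simp
        have "inj_on (\<lambda>f. f - c) M"
        proof (rule inj_onI)
          fix f g assume f: "f \<in> M" and g: "g \<in> M" and eq: "f - c = g - c"
          show "f = g"
          proof (rule ccontr)
            assume "f \<noteq> g"
            then have "f \<inter> g = {}" using disj f g by blast
            then have "f - c = {}" using eq by blast
            moreover have "f - c \<in> E2" unfolding E2_def using f ME eP by blast
            ultimately show False using ne2 by metis
          qed
        qed
        then have cM2: "card M2 = card M" unfolding M2_def by (simp add: card_image)
        show ?thesis using that[OF Q] b cP2 cM2 by simp
      qed
      define Q2' where "Q2' = (\<lambda>p. (fst p \<union> c, snd p \<union> c)) ` Q2"
      have QB: "ipart ((\<lambda>s. s \<union> c) ` faces (W - e) E2) Q2'"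
        unfolding Q2'_def
      proof (rule ipart_shift[OF Q2])
        show "\<forall>s\<in>faces (W - e) E2. s \<inter> c = {}" by (auto simp: faces_iff c_def)
      qed
      have ce: "card c = card e - 1" unfolding c_def using ye by (simp add: card_Diff_singleton)
      have fe: "finite e" using eW fW finite_subset by blast
      have cege: "card e \<ge> 1" using ye fe by (metis One_nat_def Suc_leI card_gt_0_iff empty_iff)
      have cWe: "card (W - e) = card W - card e" using eW fe by (simp add: card_Diff_subset)
      have eleW: "card e \<le> card W" using eW fW by (simp add: card_mono)
      have bB: "\<forall>q\<in>Q2'. card (fst q) + card P + card M \<le> card W"
      proof
        fix q assume "q \<in> Q2'"
        then obtain q0 where q0: "q0 \<in> Q2" "q = (fst q0 \<union> c, snd q0 \<union> c)" unfolding Q2'_def by blast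
        have "fst q0 \<in> faces (W - e) E2" using ipart_fstin[OF Q2 q0(1)] .
        then have "fst q0 \<subseteq> W - e" unfolding faces_iff by blast
        then have dj: "fst q0 \<inter> c = {}" unfolding c_def by blast
        have ff: "finite (fst q0)" using \<open>fst q0 \<subseteq> W - e\<close> fW finite_subset by blast
        have fc: "finite c" unfolding c_def using fe by simp
        have "card (fst q) = card (fst q0) + card c" using q0(2) card_Un_disjoint[OF ff fc dj] by simp
        moreover have "card (fst q0) + (card P - 1) + card M \<le> card (W - e)" using b2 q0(1) by blast
        ultimately show "card (fst q) + card P + card M \<le> card W"
          using ce cWe cege eleW cP by linarith
      qed
      have feq: "faces W E = {s \<union> t | s t. s \<in> faces (W - {y}) E1 \<and> t \<subseteq> {y}} \<union> (\<lambda>s. s \<union> c) ` faces (W - e) E2"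
        unfolding E1_def E2_def c_def by (rule faces_star[OF eE ye eW py])
      have fd: "{s \<union> t | s t. s \<in> faces (W - {y}) E1 \<and> t \<subseteq> {y}} \<inter> (\<lambda>s. s \<union> c) ` faces (W - e) E2 = {}"
        unfolding E1_def c_def by (rule faces_star_disj[OF eE ye])
      have "ipart (faces W E) (Q1' \<union> Q2')" unfolding feq by (rule ipart_union[OF QA QB fd])
      moreover have "\<forall>q\<in>Q1' \<union> Q2'. card (fst q) + card P + card M \<le> card W" using bA bB by blast
      ultimately show ?thesis by blast
    next
      case P0: True
      show ?thesis
      proof (cases "M = {}")
        case True
        have "ipart (faces W E) ((\<lambda>s. (s, s)) ` faces W E)" by (rule ipart_base[OF fW])
        moreover have "\<forall>q\<in>(\<lambda>s. (s, s)) ` faces W E. card (fst q) + card P + card M \<le> card W"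
        proof
          fix q assume "q \<in> (\<lambda>s. (s, s)) ` faces W E"
          then obtain s where s: "s \<in> faces W E" "q = (s, s)" by blast
          then have "s \<subseteq> W" unfolding faces_iff by blast
          then have "card s \<le> card W" using fW by (simp add: card_mono)
          then show "card (fst q) + card P + card M \<le> card W" using s(2) P0 True by simp
        qed
        ultimately show ?thesis by blast
      next
        case False
        then obtain g where gM: "g \<in> M" by blast
        have gE: "g \<in> E" using gM ME by blast
        then have "g \<noteq> {}" using nE by blast
        then obtain y where yg: "y \<in> g" by blast
        have yW: "y \<in> W" using yg gE EW by blast
        have cM: "card M \<ge> 1" using gM fM by (metis One_nat_def Suc_leI card_gt_0_iff empty_iff)
        have cW: "card W \<ge> 1" using yW fW by (metis One_nat_def Suc_leI card_gt_0_iff empty_iff)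
        have lt1: "card (W - {y}) < card W" using yW fW by (meson card_Diff1_less)
        have cW1: "card (W - {y}) = card W - 1" using yW fW by simp
        have yM: "y \<notin> f" if "f \<in> M - {g}" for f
        proof -
          have "f \<inter> g = {}" using that disj gM by blast
          then show ?thesis using yg by blast
        qed
        have dj1: "\<forall>f\<in>M - {g}. \<forall>h\<in>M - {g}. f \<noteq> h \<longrightarrow> f \<inter> h = {}" using disj by blast
        define E1 where "E1 = {f \<in> E. y \<notin> f}"
        have E1W: "E1 \<subseteq> Pow (W - {y})" using EW unfolding E1_def by blast
        have M1E: "M - {g} \<subseteq> E1 - {}" using yM ME unfolding E1_def by blast
        have pr1: "\<forall>e\<in>({}::'a set set). \<exists>p\<in>e. \<forall>f\<in>E1. p \<in> f \<longrightarrow> f = e" by blast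
        obtain Q1 where Q1: "ipart (faces (W - {y}) E1) Q1"
          and b1: "\<forall>q\<in>Q1. card (fst q) + card ({}::'a set set) + card (M - {g}) \<le> card (W - {y})"
          using less.hyps[OF lt1 finite_Diff[OF fW] E1W empty_subsetI M1E pr1 dj1] by blast
        have bA: "\<forall>q\<in>Q1. card (fst q) + card P + card M \<le> card W"
        proof
          fix q assume "q \<in> Q1"
          then have "card (fst q) + card (M - {g}) \<le> card (W - {y})" using b1 by simp
          moreover have "card (M - {g}) = card M - 1" using gM fM by simp
          ultimately show "card (fst q) + card P + card M \<le> card W" using P0 cM cW cW1 by simp
        qed
        define E2 where "E2 = (\<lambda>f. f - {y}) ` E"
        have E2W: "E2 \<subseteq> Pow (W - {y})" using EW unfolding E2_def by blast
        obtain Q2 where Q2: "ipart (faces (W - {y}) E2) Q2"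
          and b2: "\<forall>q\<in>Q2. card (fst q) + card M \<le> card (W - {y})"
        proof (cases "g - {y} \<in> M - {g}")
          case True
          then have gy: "g - {y} \<in> M" "g - {y} \<noteq> g" by blast+
          have "(g - {y}) \<inter> g = {}" by (rule disj[rule_format, OF gy(1) gM gy(2)])
          then have "g - {y} = {}" by blast
          moreover have "g - {y} \<in> E2" unfolding E2_def using gE by blast
          ultimately have "{} \<in> E2" by metis
          then show ?thesis by (intro that[OF ipart_faces_empty]) auto
        next
          case False
          define M2 where "M2 = insert (g - {y}) (M - {g})"
          have M2E: "M2 \<subseteq> E2 - {}"
          proof
            fix x assume "x \<in> M2"
            then have "x = g - {y} \<or> x \<in> M - {g}" unfolding M2_def by blast
            then show "x \<in> E2 - {}"
            proof
              assume "x = g - {y}" then show ?thesis unfolding E2_def using gE by blast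
            next
              assume x: "x \<in> M - {g}"
              then have "x = x - {y}" using yM by blast
              moreover have "x \<in> E" using x ME by blast
              ultimately have "x \<in> E2" unfolding E2_def by (rule image_eqI)
              then show ?thesis by blast
            qed
          qed
          have disj2: "\<forall>f\<in>M2. \<forall>h\<in>M2. f \<noteq> h \<longrightarrow> f \<inter> h = {}"
          proof (intro ballI impI)
            fix f h assume fM2: "f \<in> M2" and hM2: "h \<in> M2" and fh: "f \<noteq> h"
            have f': "f = g - {y} \<or> f \<in> M - {g}" using fM2 unfolding M2_def by blast
            have h': "h = g - {y} \<or> h \<in> M - {g}" using hM2 unfolding M2_def by blast
            show "f \<inter> h = {}"
            proof (cases "f = g - {y}")
              case True
              then have hM: "h \<in> M - {g}" using h' fh by blast
              then have "g \<inter> h = {}" using disj gM by blast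
              then show ?thesis using True by blast
            next
              case False
              then have fM: "f \<in> M - {g}" using f' by blast
              show ?thesis
              proof (cases "h = g - {y}")
                case True
                have "f \<inter> g = {}" using disj gM fM by blast
                then show ?thesis using True by blast
              next
                case False
                then have "h \<in> M - {g}" using h' by blast
                then show ?thesis using disj fM fh by blast
              qed
            qed
          qed
          have pr2: "\<forall>e\<in>({}::'a set set). \<exists>p\<in>e. \<forall>f\<in>E2. p \<in> f \<longrightarrow> f = e" by blast
          obtain Q where Q: "ipart (faces (W - {y}) E2) Q"
            and b: "\<forall>q\<in>Q. card (fst q) + card ({}::'a set set) + card M2 \<le> card (W - {y})"
            using less.hyps[OF lt1 finite_Diff[OF fW] E2W empty_subsetI M2E pr2 disj2] by blast
          have "card M2 = card M"
          proof -
            have "card M2 = Suc (card (M - {g}))" unfolding M2_def using False fM by simp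
            also have "\<dots> = card M" using gM fM cM by simp
            finally show ?thesis .
          qed
          then show ?thesis using that[OF Q] b by simp
        qed
        define Q2' where "Q2' = (\<lambda>p. (fst p \<union> {y}, snd p \<union> {y})) ` Q2"
        have QB: "ipart ((\<lambda>s. s \<union> {y}) ` faces (W - {y}) E2) Q2'"
          unfolding Q2'_def by (rule ipart_shift[OF Q2]) (intro ballI, erule faces_disj)
        have bB: "\<forall>q\<in>Q2'. card (fst q) + card P + card M \<le> card W"
        proof
          fix q assume "q \<in> Q2'"
          then obtain q0 where q0: "q0 \<in> Q2" "q = (fst q0 \<union> {y}, snd q0 \<union> {y})" unfolding Q2'_def by blast
          have "fst q0 \<subseteq> W - {y}" using ipart_fstin[OF Q2 q0(1)] unfolding faces_iff by blast
          have "finite (fst q0)" using \<open>fst q0 \<subseteq> W - {y}\<close> fW finite_subset by blast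
          moreover have "y \<notin> fst q0" using \<open>fst q0 \<subseteq> W - {y}\<close> by blast
          ultimately have "card (insert y (fst q0)) = Suc (card (fst q0))" by simp
          moreover have "fst q = insert y (fst q0)" using q0(2) by simp
          ultimately have "card (fst q) = Suc (card (fst q0))" by simp
          then show "card (fst q) + card P + card M \<le> card W" using b2 q0(1) P0 cW cW1 by fastforce
        qed
        have feq: "faces W E = faces (W - {y}) E1 \<union> (\<lambda>s. s \<union> {y}) ` faces (W - {y}) E2"
          unfolding E1_def E2_def by (rule faces_dl[OF yW])
        have "ipart (faces W E) (Q1 \<union> Q2')"
          unfolding feq by (rule ipart_union[OF Q1 QB faces_dl_disj])
        moreover have "\<forall>q\<in>Q1 \<union> Q2'. card (fst q) + card P + card M \<le> card W" using bA bB by blast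
        ultimately show ?thesis by blast
      qed
    qed
  qed
qed


lemma piece_iff:
  assumes "u \<subseteq> Z"
  shows "m \<in> stanley_piece (u, Z) \<longleftrightarrow> u \<subseteq> {x. m x \<noteq> 0} \<and> {x. m x \<noteq> 0} \<subseteq> Z"
proof
  assume "m \<in> stanley_piece (u, Z)"
  then obtain v where v: "v \<in> monomials Z" "m = (\<lambda>x. (if x \<in> u then 1 else 0) + v x)"
    unfolding stanley_piece_def by auto
  have vz: "\<And>x. x \<notin> Z \<Longrightarrow> v x = 0" using v(1) unfolding monomials_def by blast
  show "u \<subseteq> {x. m x \<noteq> 0} \<and> {x. m x \<noteq> 0} \<subseteq> Z"
  proof
    show "u \<subseteq> {x. m x \<noteq> 0}" using v(2) by auto
    show "{x. m x \<noteq> 0} \<subseteq> Z"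
    proof
      fix x assume "x \<in> {x. m x \<noteq> 0}"
      then have "m x \<noteq> 0" by simp
      show "x \<in> Z"
      proof (rule ccontr)
        assume "x \<notin> Z"
        then have "x \<notin> u" "v x = 0" using assms vz by auto
        then have "m x = 0" using v(2) by simp
        then show False using \<open>m x \<noteq> 0\<close> by simp
      qed
    qed
  qed
next
  assume a: "u \<subseteq> {x. m x \<noteq> 0} \<and> {x. m x \<noteq> 0} \<subseteq> Z"
  define v where "v = (\<lambda>x. m x - (if x \<in> u then 1 else 0))"
  have "v \<in> monomials Z"
  proof -
    have "v x = 0" if "x \<notin> Z" for x
    proof -
      have "m x = 0" using a that by blast
      then show ?thesis unfolding v_def by simp
    qed
    then show ?thesis unfolding monomials_def by blast
  qed
  moreover have "m = (\<lambda>x. (if x \<in> u then 1 else 0) + v x)"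
  proof
    fix x
    show "m x = (if x \<in> u then 1 else 0) + v x"
    proof (cases "x \<in> u")
      case True
      then have "m x \<noteq> 0" using a by blast
      then show ?thesis using True unfolding v_def by simp
    next
      case False
      then show ?thesis unfolding v_def by simp
    qed
  qed
  ultimately show "m \<in> stanley_piece (u, Z)" unfolding stanley_piece_def by auto
qed

lemma std_iff: "m \<in> std_monomials X E \<longleftrightarrow> {x. m x \<noteq> 0} \<in> faces X E"
proof -
  have 1: "m \<in> monomials X \<longleftrightarrow> {x. m x \<noteq> 0} \<subseteq> X" unfolding monomials_def by auto
  have 2: "in_edge_ideal E m \<longleftrightarrow> (\<exists>f\<in>E. f \<subseteq> {x. m x \<noteq> 0})" unfolding in_edge_ideal_def by auto
  have 3: "m \<in> std_monomials X E \<longleftrightarrow> m \<in> monomials X \<and> \<not> in_edge_ideal E m"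
    unfolding std_monomials_def by simp
  show ?thesis unfolding 3 1 2 faces_iff by blast
qed

lemma bridge:
  assumes Q: "ipart (faces X E) Q"
  shows "\<exists>D. stanley_decomposition X E D \<and> set D = Q"
proof -
  obtain D where D: "set D = Q" "distinct D" using finite_distinct_list[OF ipart_fin[OF Q]] by blast
  have c1: "\<forall>(u, Z) \<in> set D. u \<subseteq> Z \<and> Z \<subseteq> X"
  proof
    fix p assume p: "p \<in> set D"
    then have pQ: "p \<in> Q" using D by simp
    have le: "fst p \<subseteq> snd p" using ipart_le[OF Q pQ] .
    have "snd p \<in> faces X E" using ipart_in[OF Q pQ le order_refl] .
    then have "snd p \<subseteq> X" unfolding faces_iff by blast
    then show "case p of (u, Z) \<Rightarrow> u \<subseteq> Z \<and> Z \<subseteq> X" using le by (cases p) simp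
  qed
  have mem: "m \<in> stanley_piece p \<longleftrightarrow> fst p \<subseteq> {x. m x \<noteq> 0} \<and> {x. m x \<noteq> 0} \<subseteq> snd p"
    if "p \<in> Q" for p m
  proof -
    have "fst p \<subseteq> snd p" using ipart_le[OF Q that] .
    then show ?thesis using piece_iff[of "fst p" "snd p" m] by simp
  qed
  have c2: "\<forall>i < length D. stanley_piece (D ! i) \<subseteq> std_monomials X E"
  proof (intro allI impI subsetI)
    fix i m assume i: "i < length D" and m: "m \<in> stanley_piece (D ! i)"
    have pQ: "D ! i \<in> Q" using D(1) i nth_mem by blast
    then have "fst (D ! i) \<subseteq> {x. m x \<noteq> 0}" "{x. m x \<noteq> 0} \<subseteq> snd (D ! i)" using mem[OF pQ] m by blast+
    then have "{x. m x \<noteq> 0} \<in> faces X E" using ipart_in[OF Q pQ] by blast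
    then show "m \<in> std_monomials X E" using std_iff by blast
  qed
  have c3: "\<forall>m \<in> std_monomials X E. \<exists>!i. i < length D \<and> m \<in> stanley_piece (D ! i)"
  proof
    fix m assume "m \<in> std_monomials X E"
    then have sf: "{x. m x \<noteq> 0} \<in> faces X E" using std_iff by blast
    obtain p where p: "p \<in> Q" "fst p \<subseteq> {x. m x \<noteq> 0}" "{x. m x \<noteq> 0} \<subseteq> snd p"
      using ipart_ex[OF Q sf] by blast
    obtain i where i: "i < length D" "D ! i = p" using p(1) D(1) by (metis in_set_conv_nth)
    show "\<exists>!i. i < length D \<and> m \<in> stanley_piece (D ! i)"
    proof (rule ex1I[where a=i])
      have "m \<in> stanley_piece p" using mem[OF p(1)] p(2,3) by blast
      then show "i < length D \<and> m \<in> stanley_piece (D ! i)" using i by simp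
    next
      fix j assume j: "j < length D \<and> m \<in> stanley_piece (D ! j)"
      have jQ: "D ! j \<in> Q" using D(1) j nth_mem by blast
      then have "fst (D ! j) \<subseteq> {x. m x \<noteq> 0}" "{x. m x \<noteq> 0} \<subseteq> snd (D ! j)" using mem[OF jQ] j by blast+
      then have "D ! j = p" using ipart_uniq[OF Q sf jQ p(1) _ _ p(2,3)] by blast
      then have "D ! j = D ! i" using i by simp
      then show "j = i" using D(2) i(1) j nth_eq_iff_index_eq by blast
    qed
  qed
  have "stanley_decomposition X E D" unfolding stanley_decomposition_def by (intro conjI c1 c2 c3)
  then show ?thesis using D(1) by blast
qed

lemma faces_ext:
  assumes "V \<subseteq> X" "E \<subseteq> Pow V"
  shows "faces X E = {s \<union> t | s t. s \<in> faces V E \<and> t \<subseteq> X - V}"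
proof
  show "faces X E \<subseteq> {s \<union> t | s t. s \<in> faces V E \<and> t \<subseteq> X - V}"
  proof
    fix r assume r: "r \<in> faces X E"
    have "r \<inter> V \<in> faces V E" using r unfolding faces_iff by blast
    moreover have "r - V \<subseteq> X - V" using r unfolding faces_iff by blast
    ultimately show "r \<in> {s \<union> t | s t. s \<in> faces V E \<and> t \<subseteq> X - V}"
      by (intro CollectI exI[of _ "r \<inter> V"] exI[of _ "r - V"] conjI) blast+
  qed
next
  show "{s \<union> t | s t. s \<in> faces V E \<and> t \<subseteq> X - V} \<subseteq> faces X E"
  proof
    fix r assume "r \<in> {s \<union> t | s t. s \<in> faces V E \<and> t \<subseteq> X - V}"
    then obtain s t where st: "r = s \<union> t" "s \<in> faces V E" "t \<subseteq> X - V" by blast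
    have sV: "s \<subseteq> V" and sf: "\<And>f. f \<in> E \<Longrightarrow> \<not> f \<subseteq> s" using st(2) unfolding faces_iff by auto
    show "r \<in> faces X E" unfolding faces_iff
    proof (intro conjI ballI)
      show "r \<subseteq> X" using st(1,3) sV assms(1) by blast
      fix f assume f: "f \<in> E"
      show "\<not> f \<subseteq> r"
      proof
        assume "f \<subseteq> r"
        moreover have "f \<subseteq> V" using f assms(2) by blast
        ultimately have "f \<subseteq> s" using st(1,3) by blast
        then show False using sf f by blast
      qed
    qed
  qed
qed


theorem theorem4p1:
  fixes X V :: "'a set" and E :: "'a set set"
  assumes "finite X" and "V \<subseteq> X" and "clutter V E"
  shows "int (sreg X E) \<le> int (card V) - int (card E) + int (card (remove_free_edges E))
           - int (matching_number (remove_free_edges E))"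
proof -
  have fV: "finite V" using assms(3) unfolding clutter_def by blast
  have EV: "E \<subseteq> Pow V" using assms(3) unfolding clutter_def by blast
  have nE: "{} \<notin> E" using assms(3) unfolding clutter_def by blast
  have fE: "finite E" using EV fV by (meson finite_Pow_iff finite_subset)
  define E' where "E' = remove_free_edges E"
  define P where "P = E - E'"
  have E'E: "E' \<subseteq> E" unfolding E'_def remove_free_edges_def by blast
  have fE': "finite E'" using E'E fE finite_subset by blast
  have PE: "P \<subseteq> E" unfolding P_def by blast
  have privP: "\<forall>e\<in>P. \<exists>p\<in>e. \<forall>f\<in>E. p \<in> f \<longrightarrow> f = e"
  proof
    fix e assume "e \<in> P"
    then have "has_free_vertex E e" unfolding P_def E'_def remove_free_edges_def by blast
    then obtain x where "free_vertex E e x" unfolding has_free_vertex_def by blast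
    then show "\<exists>p\<in>e. \<forall>f\<in>E. p \<in> f \<longrightarrow> f = e" unfolding free_vertex_def by blast
  qed
  define S where "S = {card M | M. matching E' M}"
  have "S \<subseteq> card ` Pow E'" unfolding S_def matching_def by blast
  then have fS: "finite S" using fE' finite_subset by blast
  have "matching E' {}" unfolding matching_def by blast
  then have "0 \<in> S" unfolding S_def by force
  then have "Max S \<in> S" using fS Max_in by blast
  then obtain M where M: "matching E' M" "card M = matching_number E'"
    unfolding S_def matching_number_def by auto
  have ME: "M \<subseteq> E - P" using M(1) E'E unfolding matching_def P_def by blast
  have disjM: "\<forall>f\<in>M. \<forall>g\<in>M. f \<noteq> g \<longrightarrow> f \<inter> g = {}" using M(1) unfolding matching_def by blast
  obtain Q where Q: "ipart (faces V E) Q" and bQ: "\<forall>q\<in>Q. card (fst q) + card P + card M \<le> card V"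
    using main[OF fV EV PE ME privP disjM] by blast
  define Q' where "Q' = (\<lambda>p. (fst p, snd p \<union> (X - V))) ` Q"
  have "ipart {s \<union> t | s t. s \<in> faces V E \<and> t \<subseteq> X - V} Q'"
    unfolding Q'_def by (rule ipart_cone[OF Q]) (auto simp: faces_iff)
  then have Q': "ipart (faces X E) Q'" using faces_ext[OF assms(2) EV] by simp
  obtain D where D: "stanley_decomposition X E D" "set D = Q'" using bridge[OF Q'] by blast
  have "{} \<in> faces V E" using nE unfolding faces_iff by auto
  then obtain q0 where "q0 \<in> Q" using ipart_ex[OF Q] by blast
  then have PMV: "card P + card M \<le> card V" using bQ by fastforce
  define B where "B = card V - card P - card M"
  have "stanley_reg_of D \<le> B"
  proof -
    have "x \<le> B" if "x \<in> insert 0 ((card \<circ> fst) ` set D)" for x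
    proof -
      have "x = 0 \<or> x \<in> (card \<circ> fst) ` Q'" using that D(2) by blast
      then show ?thesis
      proof
        assume "x = 0" then show ?thesis by simp
      next
        assume "x \<in> (card \<circ> fst) ` Q'"
        then obtain q where q: "q \<in> Q" "x = card (fst q)" unfolding Q'_def by auto
        then show ?thesis using bQ unfolding B_def by fastforce
      qed
    qed
    moreover have "finite (insert 0 ((card \<circ> fst) ` set D))" by simp
    ultimately show ?thesis unfolding stanley_reg_of_def by (simp add: Max_le_iff)
  qed
  moreover have "sreg X E \<le> stanley_reg_of D"
    unfolding sreg_def by (rule Least_le) (use D(1) in blast)
  ultimately have sB: "sreg X E \<le> B" by simp
  have "card E = card P + card E'" unfolding P_def using E'E fE
    by (metis card_Diff_subset card_mono le_add_diff_inverse2 fE')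
  then show ?thesis using sB PMV M(2) unfolding B_def E'_def by linarith
qed

end
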